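(* Let $1\le m<n$ and let $v_1\ge v_2\ge\cdots\ge v_n$ be reals with $v_m>0$. Let $k=\max\{i:v_i>v_m/2\}$ (so $k\ge m$). For $i\in[n]$ define $B_i=\sum_{j=1}^k\frac{m}{j(j+1)}\log_2^\dagger(v_i/v_j)$. Then $\sum_{i=m}^kB_i\le m$.
   Context: $\log_2^\dagger(\alpha)=\max(0,\min(1,\log_2\alpha))$ for $\alpha\ge 0$. *)

theory Defs
  imports Complex_Main
begin

definition log2dagger :: "real \<Rightarrow> real" where
  "log2dagger \<alpha> = max 0 (min 1 (log 2 \<alpha>))"

end

theory Submission
  imports Defs
begin

lemma key:
  fixes a :: "nat \<Rightarrow> real" and m K :: nat
  assumes m1: "1 \<le> m" and mK: "m \<le> K"
    and mono: "\<And>i j. 1 \<le> i \<Longrightarrow> i \<le> j \<Longrightarrow> j \<le> K \<Longrightarrow> a j \<le> a i"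
  shows "(\<Sum>i=m..K. \<Sum>j=1..K. real m / (real j * (real j + 1)) * max 0 (a i - a j))
         + real m / (real K + 1) * (\<Sum>i=m..K. (a i - a K)) \<le> real m * (a m - a K)"
  using mK mono
proof (induction K rule: dec_induct)
  case base
  have "(\<Sum>j=1..m. real m / (real j * (real j + 1)) * max 0 (a m - a j)) = 0"
  proof (rule sum.neutral, intro ballI)
    fix j assume "j \<in> {1..m}"
    then have "a m \<le> a j" using base by auto
    then show "real m / (real j * (real j + 1)) * max 0 (a m - a j) = 0" by simp
  qed
  then show ?case by simp
next
  case (step K)
  define c where "c = (\<lambda>j::nat. real m / (real j * (real j + 1)))"
  have IH: "(\<Sum>i=m..K. \<Sum>j=1..K. c j * max 0 (a i - a j))
         + real m / (real K + 1) * (\<Sum>i=m..K. (a i - a K)) \<le> real m * (a m - a K)"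
    using step.IH step.prems unfolding c_def by auto
  have mon: "\<And>i j. 1 \<le> i \<Longrightarrow> i \<le> j \<Longrightarrow> j \<le> Suc K \<Longrightarrow> a j \<le> a i" using step.prems by auto
  have last0: "(\<Sum>j=1..Suc K. c j * max 0 (a (Suc K) - a j)) = 0"
  proof (rule sum.neutral, intro ballI)
    fix j assume "j \<in> {1..Suc K}"
    then have "a (Suc K) \<le> a j" using mon by auto
    then show "c j * max 0 (a (Suc K) - a j) = 0" by simp
  qed
  have inner: "(\<Sum>j=1..Suc K. c j * max 0 (a i - a j)) =
        (\<Sum>j=1..K. c j * max 0 (a i - a j)) + c (Suc K) * (a i - a (Suc K))"
    if "i \<in> {m..K}" for i
  proof -
    have "a (Suc K) \<le> a i" using mon that m1 by auto
    then show ?thesis by (simp add: sum.atLeast_Suc_atMost_Suc_shift[symmetric] ) 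
  qed
  define G where "G = (\<Sum>i=m..K. (a i - a (Suc K)))"
  define \<delta> where "\<delta> = a K - a (Suc K)"
  have \<delta>0: "\<delta> \<ge> 0" unfolding \<delta>_def using mon step.hyps m1 by auto
  have F0: "(\<Sum>i=m..Suc K. \<Sum>j=1..Suc K. c j * max 0 (a i - a j)) =
      (\<Sum>i=m..K. \<Sum>j=1..Suc K. c j * max 0 (a i - a j))"
    using step.hyps last0 by (simp add: sum.atLeast_Suc_atMost)
  also have "\<dots> = (\<Sum>i=m..K. ((\<Sum>j=1..K. c j * max 0 (a i - a j)) + c (Suc K) * (a i - a (Suc K))))"
    using inner by (rule sum.cong[OF refl])
  also have "\<dots> = (\<Sum>i=m..K. \<Sum>j=1..K. c j * max 0 (a i - a j)) + c (Suc K) * G"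
    by (simp add: sum.distrib sum_distrib_left G_def)
  finally have F: "(\<Sum>i=m..Suc K. \<Sum>j=1..Suc K. c j * max 0 (a i - a j)) =
      (\<Sum>i=m..K. \<Sum>j=1..K. c j * max 0 (a i - a j)) + c (Suc K) * G" .
  have G2: "(\<Sum>i=m..Suc K. (a i - a (Suc K))) = G"
    using step.hyps by (simp add: G_def)
  have G3: "G = (\<Sum>i=m..K. (a i - a K)) + real (Suc K - m) * \<delta>"
  proof -
    have "G = (\<Sum>i=m..K. ((a i - a K) + \<delta>))" unfolding G_def \<delta>_def by simp
    also have "\<dots> = (\<Sum>i=m..K. (a i - a K)) + real (Suc K - m) * \<delta>"
      by (simp add: sum.distrib)
    finally show ?thesis .
  qed
  have cc: "c (Suc K) + real m / (real (Suc K) + 1) = real m / (real K + 1)"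
  proof -
    have "real m / (x * (x + 1)) + real m / (x + 1) = real m / x" if "x > 0" for x :: real
    proof -
      have nz: "x + x * x \<noteq> 0" using that by (smt (verit) mult_pos_pos)
      have "(x * real m + x * (x * real m)) / (x + x * x) = real m"
        using nz by (simp add: divide_eq_eq algebra_simps)
      then show ?thesis using that by (simp add: field_simps)
    qed
    from this[of "real K + 1"] show ?thesis unfolding c_def by (simp add: add.commute)
  qed
  have fr: "real (Suc K - m) / (real K + 1) \<le> 1" using step.hyps m1 by (simp add: of_nat_diff)
  have "real m * (real (Suc K - m) * \<delta>) / (real K + 1) \<le> real m * \<delta>"
  proof -
    have "real m * (real (Suc K - m) * \<delta>) / (real K + 1) = real m * \<delta> * (real (Suc K - m) / (real K + 1))"
      by simp
    also have "\<dots> \<le> real m * \<delta> * 1" by (rule mult_left_mono[OF fr]) (use \<delta>0 in simp)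
    finally show ?thesis by simp
  qed
  note B = this
  define F0 where "F0 = (\<Sum>i=m..K. \<Sum>j=1..K. c j * max 0 (a i - a j))"
  define H where "H = (\<Sum>i=m..K. (a i - a K))"
  have "(\<Sum>i=m..Suc K. \<Sum>j=1..Suc K. c j * max 0 (a i - a j))
         + real m / (real (Suc K) + 1) * (\<Sum>i=m..Suc K. (a i - a (Suc K)))
       = F0 + (c (Suc K) + real m / (real (Suc K) + 1)) * G"
    unfolding F G2 F0_def by (simp add: algebra_simps)
  also have "\<dots> = F0 + real m / (real K + 1) * H + real m * (real (Suc K - m) * \<delta>) / (real K + 1)"
    unfolding cc G3 H_def by (simp add: algebra_simps)
  also have "\<dots> \<le> real m * (a m - a K) + real m * \<delta>"
    using IH B unfolding F0_def H_def by linarith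
  also have "\<dots> = real m * (a m - a (Suc K))" unfolding \<delta>_def by (simp add: algebra_simps)
  finally have "(\<Sum>i=m..Suc K. \<Sum>j=1..Suc K. c j * max 0 (a i - a j))
         + real m / (real (Suc K) + 1) * (\<Sum>i=m..Suc K. (a i - a (Suc K))) \<le> real m * (a m - a (Suc K))" .
  then show ?case unfolding c_def .
qed

theorem mainTheorem19:
  fixes v :: "nat \<Rightarrow> real" and m n k :: nat
  assumes "1 \<le> m" and "m < n"
    and "\<And>i j. 1 \<le> i \<Longrightarrow> i \<le> j \<Longrightarrow> j \<le> n \<Longrightarrow> v j \<le> v i"
    and "v m > 0"
    and "k = Max {i \<in> {1..n}. v i > v m / 2}"
  shows "(\<Sum>i=m..k. (\<Sum>j=1..k. real m / (real j * (real j + 1)) * log2dagger (v i / v j)))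
           \<le> real m"
proof -
  let ?S = "{i \<in> {1..n}. v i > v m / 2}"
  have fin: "finite ?S" by simp
  have mS: "m \<in> ?S" using assms(1,2,4) by auto
  have "Max ?S \<in> ?S" by (rule Max_in[OF fin]) (use mS in blast)
  then have kS: "k \<in> ?S" using assms(5) by simp
  have mk: "m \<le> k" using assms(5) Max_ge[OF fin mS] by auto
  have kn: "k \<le> n" and vk: "v k > v m / 2" using kS by auto
  define a where "a = (\<lambda>i. log 2 (v i))"
  have vpos: "v j > 0" if "1 \<le> j" "j \<le> k" for j
    using assms(3)[of j k] that kn vk assms(4) by auto
  have eq: "log2dagger (v i / v j) = max 0 (a i - a j)"
    if i: "i \<in> {m..k}" and j: "j \<in> {1..k}" for i j
  proof -
    have vi: "v i > 0" "v i \<le> v m" using vpos[of i] i assms(1) assms(3)[of m i] kn by auto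
    have vj: "v j > 0" "v j \<ge> v k" using vpos[of j] j assms(3)[of j k] kn by auto
    have "v i < 2 * v j" using vi vj vk by linarith
    then have "v i / v j < 2" using vj by (simp add: divide_less_eq)
    then have "log 2 (v i / v j) < 1" using vi vj
      by (subst log_less_one_cancel_iff) auto
    moreover have "log 2 (v i / v j) = a i - a j" unfolding a_def using vi vj by (simp add: log_divide)
    ultimately show ?thesis unfolding log2dagger_def by simp
  qed
  have "(\<Sum>i=m..k. (\<Sum>j=1..k. real m / (real j * (real j + 1)) * log2dagger (v i / v j)))
      = (\<Sum>i=m..k. \<Sum>j=1..k. real m / (real j * (real j + 1)) * max 0 (a i - a j))"
    using eq by (intro sum.cong refl) auto
  also have "\<dots> \<le> real m * (a m - a k)"
  proof -
    have monoa: "a j \<le> a i" if "1 \<le> i" "i \<le> j" "j \<le> k" for i j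
      unfolding a_def using vpos[of j] that assms(3)[of i j] kn by simp
    have G: "0 \<le> (\<Sum>i=m..k. (a i - a k))"
      using monoa assms(1) by (intro sum_nonneg) auto
    have "0 \<le> real m / (real k + 1) * (\<Sum>i=m..k. (a i - a k))" using G by simp
    with key[of m k a, OF assms(1) mk monoa] show ?thesis by linarith
  qed
  also have "\<dots> \<le> real m * 1"
  proof -
    have "v m < 2 * v k" using vk by linarith
    then have "v m / v k < 2" using vpos[of k] assms(1) mk by (simp add: divide_less_eq)
    then have "log 2 (v m / v k) < 1" using vpos[of k] assms(1,4) mk
      by (subst log_less_one_cancel_iff) auto
    then have "a m - a k \<le> 1" unfolding a_def using vpos[of k] assms(1,4) mk by (simp add: log_divide)
    then show ?thesis by (intro mult_left_mono) auto
  qed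
  finally show ?thesis by simp
qed

end
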